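(* Let $P$ be a finite poset and $q$ a positive integer. For every $f\in\mathrm{Inc}^q(P)$, $\mathrm{JdtPro}(f)\in\mathrm{Inc}^q(P)$.
   Context: $\mathrm{Inc}^q(P)$ is the set of $f:P\to\{1,\dots,q\}$ with $p_1<p_2\Rightarrow f(p_1)<f(p_2)$. For labelings $g:P\to\mathbb{Z}\cup\{\square\}$, the slide $\sigma_i$ is defined (simultaneously at all $x$, using the values of $g$) by $\sigma_i(g)(x)=i$ if $g(x)=\square$ and $g(y)=i$ for some $y\gtrdot x$; $\sigma_i(g)(x)=\square$ if $g(x)=i$ and $g(z)=\square$ for some $z\lessdot x$; $\sigma_i(g)(x)=g(x)$ otherwise. $\sigma_{a\to b}$ replaces every label $a$ by $b$. $jdt(f)=\sigma_{\square\to q+1}\circ\sigma_q\circ\cdots\circ\sigma_2\circ\sigma_{1\to\square}(f)$ and $\mathrm{JdtPro}(f)(x)=jdt(f)(x)-1$. *)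

theory Defs
  imports Main
begin

text \<open>A finite poset is modelled as a finite carrier set P of a type with a partial order;
  the order on P is the induced one. Labelings P -> Z \<union> {box} are functions into int option,
  with None playing the role of the empty box.\<close>

definition covers :: "'a::order set \<Rightarrow> 'a \<Rightarrow> 'a \<Rightarrow> bool" where
  "covers P x y \<longleftrightarrow> x \<in> P \<and> y \<in> P \<and> x < y \<and> \<not> (\<exists>z\<in>P. x < z \<and> z < y)"

definition Inc :: "nat \<Rightarrow> 'a::order set \<Rightarrow> ('a \<Rightarrow> int) set" where
  "Inc q P = {f. (\<forall>x\<in>P. f x \<in> {1..int q}) \<and> (\<forall>x\<in>P. \<forall>y\<in>P. x < y \<longrightarrow> f x < f y)}"

definition slide :: "'a::order set \<Rightarrow> int \<Rightarrow> ('a \<Rightarrow> int option) \<Rightarrow> ('a \<Rightarrow> int option)" where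
  "slide P i g = (\<lambda>x.
     if g x = None \<and> (\<exists>y. covers P x y \<and> g y = Some i) then Some i
     else if g x = Some i \<and> (\<exists>z. covers P z x \<and> g z = None) then None
     else g x)"

definition relabel :: "int option \<Rightarrow> int option \<Rightarrow> ('a \<Rightarrow> int option) \<Rightarrow> ('a \<Rightarrow> int option)" where
  "relabel a b g = (\<lambda>x. if g x = a then b else g x)"

text \<open>jdt(f) = sigma_{box -> q+1} o sigma_q o ... o sigma_2 o sigma_{1 -> box} (f).\<close>
definition jdt :: "'a::order set \<Rightarrow> nat \<Rightarrow> ('a \<Rightarrow> int) \<Rightarrow> ('a \<Rightarrow> int option)" where
  "jdt P q f = relabel None (Some (int q + 1))
      (foldl (\<lambda>g i. slide P i g) (relabel (Some 1) None (\<lambda>x. Some (f x))) [2..int q])"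

definition JdtPro :: "'a::order set \<Rightarrow> nat \<Rightarrow> ('a \<Rightarrow> int) \<Rightarrow> ('a \<Rightarrow> int)" where
  "JdtPro P q f = (\<lambda>x. the (jdt P q f x) - 1)"

end

theory Submission
  imports Defs
begin

lemma cover_above:
  fixes P :: "'a::order set"
  assumes "finite P" "x \<in> P" "y \<in> P" "x < y"
  shows "\<exists>c. covers P x c \<and> c \<le> y"
proof -
  let ?S = "{c\<in>P. x < c \<and> c \<le> y}"
  have "finite ?S" "?S \<noteq> {}" using assms by auto
  then obtain m where m: "m \<in> ?S" "\<forall>b\<in>?S. b \<le> m \<longrightarrow> m = b"
    using finite_has_minimal by blast
  have "covers P x m" unfolding covers_def
  proof (intro conjI)
    show "\<not> (\<exists>z\<in>P. x < z \<and> z < m)"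
    proof
      assume "\<exists>z\<in>P. x < z \<and> z < m"
      then obtain z where z: "z \<in> P" "x < z" "z < m" by blast
      hence "z \<in> ?S" using m(1) by auto
      with m(2) z(3) show False by fastforce
    qed
  qed (use m assms in auto)
  thus ?thesis using m by auto
qed

lemma cover_below:
  fixes P :: "'a::order set"
  assumes "finite P" "x \<in> P" "y \<in> P" "x < y"
  shows "\<exists>c. covers P c y \<and> x \<le> c"
proof -
  let ?S = "{c\<in>P. x \<le> c \<and> c < y}"
  have "finite ?S" "?S \<noteq> {}" using assms by auto
  then obtain m where m: "m \<in> ?S" "\<forall>b\<in>?S. m \<le> b \<longrightarrow> m = b"
    using finite_has_maximal by blast
  have "covers P m y" unfolding covers_def
  proof (intro conjI)
    show "\<not> (\<exists>z\<in>P. m < z \<and> z < y)"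
    proof
      assume "\<exists>z\<in>P. m < z \<and> z < y"
      then obtain z where z: "z \<in> P" "m < z" "z < y" by blast
      hence "z \<in> ?S" using m(1) by auto
      with m(2) z(2) show False by fastforce
    qed
  qed (use m assms in auto)
  thus ?thesis using m by auto
qed

definition inv :: "'a::order set \<Rightarrow> nat \<Rightarrow> int \<Rightarrow> ('a \<Rightarrow> int option) \<Rightarrow> bool" where
  "inv P q i g \<longleftrightarrow>
    (\<forall>x\<in>P. \<forall>v. g x = Some v \<longrightarrow> 2 \<le> v \<and> v \<le> int q) \<and>
    (\<forall>x\<in>P. \<forall>y\<in>P. \<forall>a b. x < y \<longrightarrow> g x = Some a \<longrightarrow> g y = Some b \<longrightarrow> a < b) \<and>
    (\<forall>x\<in>P. \<forall>y\<in>P. \<forall>b. g x = None \<longrightarrow> g y = Some b \<longrightarrow> y < x \<longrightarrow> b < i) \<and>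
    (\<forall>x\<in>P. \<forall>y\<in>P. \<forall>b. g x = None \<longrightarrow> g y = Some b \<longrightarrow> x < y \<longrightarrow> i \<le> b) \<and>
    (\<forall>x\<in>P. \<forall>y\<in>P. g x = None \<longrightarrow> g y = None \<longrightarrow> \<not> x < y)"

lemma slide_Some:
  assumes "slide P i g x = Some b"
  shows "(g x = Some b \<and> \<not> (b = i \<and> (\<exists>z. covers P z x \<and> g z = None))) \<or>
         (g x = None \<and> b = i \<and> (\<exists>y. covers P x y \<and> g y = Some i))"
  using assms unfolding slide_def by (auto split: if_splits)

lemma slide_None:
  assumes "slide P i g x = None"
  shows "(g x = None \<and> \<not> (\<exists>y. covers P x y \<and> g y = Some i)) \<or>
         (g x = Some i \<and> (\<exists>z. covers P z x \<and> g z = None))"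
  using assms unfolding slide_def by (auto split: if_splits)

lemma inv_step:
  fixes P :: "'a::order set"
  assumes fin: "finite P" and I: "inv P q i g" and i2: "2 \<le> i" and iq: "i \<le> int q"
  shows "inv P q (i+1) (slide P i g)"
proof -
  let ?g = "slide P i g"
  have R: "\<forall>x\<in>P. \<forall>v. g x = Some v \<longrightarrow> 2 \<le> v \<and> v \<le> int q"
   and A: "\<And>x y a b. x\<in>P \<Longrightarrow> y\<in>P \<Longrightarrow> x < y \<Longrightarrow> g x = Some a \<Longrightarrow> g y = Some b \<Longrightarrow> a < b"
   and C1: "\<And>x y b. x\<in>P \<Longrightarrow> y\<in>P \<Longrightarrow> g x = None \<Longrightarrow> g y = Some b \<Longrightarrow> y < x \<Longrightarrow> b < i"
   and C2: "\<And>x y b. x\<in>P \<Longrightarrow> y\<in>P \<Longrightarrow> g x = None \<Longrightarrow> g y = Some b \<Longrightarrow> x < y \<Longrightarrow> i \<le> b"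
   and D: "\<And>x y. x\<in>P \<Longrightarrow> y\<in>P \<Longrightarrow> g x = None \<Longrightarrow> g y = None \<Longrightarrow> \<not> x < y"
    using I unfolding inv_def by blast+
  have cov: "\<And>x y. covers P x y \<Longrightarrow> x \<in> P \<and> y \<in> P \<and> x < y" unfolding covers_def by blast
  have key: "\<And>x y. x\<in>P \<Longrightarrow> y\<in>P \<Longrightarrow> g x = None \<Longrightarrow> g y = Some i \<Longrightarrow> x < y \<Longrightarrow>
       \<exists>z. covers P z y \<and> g z = None"
  proof -
    fix x y assume xy: "x\<in>P" "y\<in>P" "g x = None" "g y = Some i" "x < y"
    obtain c where c: "covers P c y" "x \<le> c" using cover_below[OF fin xy(1,2,5)] by blast
    show "\<exists>z. covers P z y \<and> g z = None"
    proof (cases "c = x")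
      case True thus ?thesis using c xy by auto
    next
      case False
      hence xc: "x < c" using c by auto
      have cP: "c \<in> P" "c < y" using cov[OF c(1)] by auto
      show ?thesis
      proof (cases "g c")
        case None thus ?thesis using D[OF xy(1) cP(1) xy(3)] xc by auto
      next
        case (Some v)
        have "i \<le> v" using C2[OF xy(1) cP(1) xy(3) Some xc] .
        moreover have "v < i" using A[OF cP(1) xy(2) cP(2) Some xy(4)] .
        ultimately show ?thesis by simp
      qed
    qed
  qed
  have key2: "\<And>x y. x\<in>P \<Longrightarrow> y\<in>P \<Longrightarrow> g x = None \<Longrightarrow> g y = Some i \<Longrightarrow> x < y \<Longrightarrow>
       \<exists>c. covers P x c \<and> g c = Some i"
  proof -
    fix x y assume xy: "x\<in>P" "y\<in>P" "g x = None" "g y = Some i" "x < y"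
    obtain c where c: "covers P x c" "c \<le> y" using cover_above[OF fin xy(1,2,5)] by blast
    show "\<exists>c. covers P x c \<and> g c = Some i"
    proof (cases "c = y")
      case True thus ?thesis using c xy by auto
    next
      case False
      hence cy: "c < y" using c by auto
      have cP: "c \<in> P" "x < c" using cov[OF c(1)] by auto
      show ?thesis
      proof (cases "g c")
        case None thus ?thesis using D[OF xy(1) cP(1) xy(3)] cP by auto
      next
        case (Some v)
        have "i \<le> v" using C2[OF xy(1) cP(1) xy(3) Some cP(2)] .
        moreover have "v < i" using A[OF cP(1) xy(2) cy Some xy(4)] .
        ultimately show ?thesis by simp
      qed
    qed
  qed
  have R': "\<forall>x\<in>P. \<forall>v. ?g x = Some v \<longrightarrow> 2 \<le> v \<and> v \<le> int q"
    using R slide_Some i2 iq by metis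
  have A': "\<And>x y a b. x\<in>P \<Longrightarrow> y\<in>P \<Longrightarrow> x < y \<Longrightarrow> ?g x = Some a \<Longrightarrow> ?g y = Some b \<Longrightarrow> a < b"
  proof -
    fix x y a b assume h: "x\<in>P" "y\<in>P" "x < y" "?g x = Some a" "?g y = Some b"
    from slide_Some[OF h(4)] slide_Some[OF h(5)] show "a < b"
    proof (elim disjE conjE)
      assume "g x = Some a" "g y = Some b" thus ?thesis using A h by blast
    next
      assume gx: "g x = Some a" and gy: "g y = None" "b = i"
      show ?thesis using C1[OF h(2,1) gy(1) gx h(3)] gy by simp
    next
      assume gx: "g x = None" "a = i" and gy: "g y = Some b"
        and nb: "\<not> (b = i \<and> (\<exists>z. covers P z y \<and> g z = None))"
      have "i \<le> b" using C2[OF h(1,2) gx(1) gy h(3)] .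
      moreover have "b \<noteq> i"
      proof
        assume "b = i"
        with key[OF h(1,2) gx(1) _ h(3)] gy nb show False by blast
      qed
      ultimately show ?thesis using gx by simp
    next
      assume "g x = None" "g y = None" thus ?thesis using D h by blast
    qed
  qed
  have C1': "\<And>x y b. x\<in>P \<Longrightarrow> y\<in>P \<Longrightarrow> ?g x = None \<Longrightarrow> ?g y = Some b \<Longrightarrow> y < x \<Longrightarrow> b < i+1"
  proof -
    fix x y b assume h: "x\<in>P" "y\<in>P" "?g x = None" "?g y = Some b" "y < x"
    from slide_None[OF h(3)] slide_Some[OF h(4)] show "b < i+1"
    proof (elim disjE conjE)
      assume "g x = None" "g y = Some b" thus ?thesis using C1 h by force
    next
      assume "g x = Some i" "g y = Some b" thus ?thesis using A h by force
    qed auto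
  qed
  have C2': "\<And>x y b. x\<in>P \<Longrightarrow> y\<in>P \<Longrightarrow> ?g x = None \<Longrightarrow> ?g y = Some b \<Longrightarrow> x < y \<Longrightarrow> i+1 \<le> b"
  proof -
    fix x y b assume h: "x\<in>P" "y\<in>P" "?g x = None" "?g y = Some b" "x < y"
    from slide_None[OF h(3)] slide_Some[OF h(4)] show "i+1 \<le> b"
    proof (elim disjE conjE)
      assume gx: "g x = None" and nx: "\<not> (\<exists>c. covers P x c \<and> g c = Some i)" and gy: "g y = Some b"
      have "i \<le> b" using C2[OF h(1,2) gx gy h(5)] .
      moreover have "b \<noteq> i"
      proof
        assume "b = i"
        with key2[OF h(1,2) gx _ h(5)] nx gy show False by blast
      qed
      ultimately show ?thesis by simp
    next
      assume "g x = None" "g y = None" thus ?thesis using D h by blast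
    next
      assume "g x = Some i" "g y = Some b" thus ?thesis using A h by force
    next
      assume "g x = Some i" "g y = None" thus ?thesis using C1[OF h(2,1)] h by force
    qed
  qed
  have D': "\<And>x y. x\<in>P \<Longrightarrow> y\<in>P \<Longrightarrow> ?g x = None \<Longrightarrow> ?g y = None \<Longrightarrow> \<not> x < y"
  proof
    fix x y assume h: "x\<in>P" "y\<in>P" "?g x = None" "?g y = None" and xy: "x < y"
    from slide_None[OF h(3)] slide_None[OF h(4)] show False
    proof (elim disjE conjE)
      assume "g x = None" "g y = None" thus ?thesis using D h xy by blast
    next
      assume gx: "g x = None" and nx: "\<not> (\<exists>c. covers P x c \<and> g c = Some i)" and gy: "g y = Some i"
      show ?thesis using key2[OF h(1,2) gx gy xy] nx by blast
    next
      assume "g x = Some i" "g y = None" thus ?thesis using C1[OF h(2,1)] h xy by force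
    next
      assume "g x = Some i" "g y = Some i" thus ?thesis using A[OF h(1,2) xy] by force
    qed
  qed
  show ?thesis unfolding inv_def using R' A' C1' C2' D' by blast
qed

lemma inv_fold:
  fixes P :: "'a::order set"
  assumes fin: "finite P" and I: "inv P q 2 g" and k: "int n + 1 \<le> int q"
  shows "inv P q (int n + 2) (foldl (\<lambda>g i. slide P i g) g [2..int n + 1])"
  using k
proof (induction n)
  case 0 thus ?case using I by simp
next
  case (Suc n)
  have m1: "int n + 2 - 1 = int n + 1" by simp
  have e0: "[2..int n + 2] = [2..int n + 1] @ [int n + 2]"
    using upto_rec2[of 2 "int n + 2"] unfolding m1 by simp
  have e1: "int (Suc n) + 1 = int n + 2" by simp
  have e: "[2..int (Suc n) + 1] = [2..int n + 1] @ [int n + 2]"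
    unfolding e1 by (rule e0)
  have "inv P q (int n + 2) (foldl (\<lambda>g i. slide P i g) g [2..int n + 1])"
    using Suc by simp
  from inv_step[OF fin this] Suc.prems
  show ?case unfolding e by (simp add: add.commute add.left_commute)
qed

theorem proposition3p4:
  fixes P :: "'a::order set" and q :: nat and f :: "'a \<Rightarrow> int"
  assumes "finite P" and "q > 0" and "f \<in> Inc q P"
  shows "JdtPro P q f \<in> Inc q P"
proof -
  let ?g0 = "relabel (Some 1) None (\<lambda>x. Some (f x))"
  have f1: "\<And>x. x\<in>P \<Longrightarrow> 1 \<le> f x \<and> f x \<le> int q"
   and f2: "\<And>x y. x\<in>P \<Longrightarrow> y\<in>P \<Longrightarrow> x < y \<Longrightarrow> f x < f y"
    using assms(3) unfolding Inc_def by auto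
  have g0: "\<And>x. ?g0 x = (if f x = 1 then None else Some (f x))"
    unfolding relabel_def by auto
  have I0: "inv P q 2 ?g0"
    unfolding inv_def g0 using f1 f2
    by (auto split: if_splits, (fastforce)+)
  obtain n where n: "int q = int n + 1" using assms(2) by (metis Suc_pred of_nat_Suc add.commute)
  have "inv P q (int q + 1) (foldl (\<lambda>g i. slide P i g) ?g0 [2..int q])"
    using inv_fold[OF assms(1) I0, of n] n by (simp add: add.assoc)
  then have F: "inv P q (int q + 1) (foldl (\<lambda>g i. slide P i g) ?g0 [2..int q])" .
  define G where "G = foldl (\<lambda>g i. slide P i g) ?g0 [2..int q]"
  have R: "\<And>x v. x\<in>P \<Longrightarrow> G x = Some v \<Longrightarrow> 2 \<le> v \<and> v \<le> int q"
   and A: "\<And>x y a b. x\<in>P \<Longrightarrow> y\<in>P \<Longrightarrow> x < y \<Longrightarrow> G x = Some a \<Longrightarrow> G y = Some b \<Longrightarrow> a < b"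
   and C2: "\<And>x y b. x\<in>P \<Longrightarrow> y\<in>P \<Longrightarrow> G x = None \<Longrightarrow> G y = Some b \<Longrightarrow> x < y \<Longrightarrow> int q + 1 \<le> b"
   and D: "\<And>x y. x\<in>P \<Longrightarrow> y\<in>P \<Longrightarrow> G x = None \<Longrightarrow> G y = None \<Longrightarrow> \<not> x < y"
    using F unfolding inv_def G_def by blast+
  have J: "JdtPro P q f = (\<lambda>x. case G x of None \<Rightarrow> int q | Some v \<Rightarrow> v - 1)"
    unfolding JdtPro_def jdt_def G_def relabel_def by (auto split: option.splits)
  show ?thesis unfolding Inc_def J
  proof (intro CollectI conjI ballI impI)
    fix x assume "x \<in> P"
    thus "(case G x of None \<Rightarrow> int q | Some v \<Rightarrow> v - 1) \<in> {1..int q}"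
      using R assms(2) by (cases "G x") force+
  next
    fix x y assume h: "x \<in> P" "y \<in> P" "x < y"
    show "(case G x of None \<Rightarrow> int q | Some v \<Rightarrow> v - 1) < (case G y of None \<Rightarrow> int q | Some v \<Rightarrow> v - 1)"
    proof (cases "G x")
      case None
      then show ?thesis using D[OF h(1,2)] C2[OF h(1,2)] R[OF h(2)] h(3)
        by (cases "G y") force+
    next
      case (Some a)
      then show ?thesis using A[OF h] R[OF h(1)] by (cases "G y") force+
    qed
  qed
qed

end
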